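(* Let $T\in\mathcal C(\rho)$ and define $K_T\colon G\times Y\times G\times Y\to\mathbb C$ by $K_T(x,y,u,v)=(TK_{u,v})(x,y)$. Then for every $f\in H$ and $(x,y)\in G\times Y$, \[ (Tf)(x,y)=\int_{G\times Y}K_T(x,y,u,v)\,f(u,v)\,d\nu(u)\,d\lambda(v). \] Moreover, $K_T(x,y,u,v)=K_T(x-u,y,0,v)$ for all $u,x\in G$, $v,y\in Y$, and $K_T(\cdot,\cdot,0,v)\in H$ for every $v\in Y$ and $\overline{K_T(0,y,\cdot,\cdot)}\in H$ for every $y\in Y$.
   Context: Let $G$ be a locally compact abelian group (written additively) with Haar measure $\nu$, and $(Y,\lambda)$ a measure space. Let $H$ be a reproducing kernel Hilbert space of complex functions on $G\times Y$ whose inner product is that of $L^2(G\times Y,\nu\otimes\lambda)$, with reproducing kernel $(K_{x,y})_{(x,y)\in G\times Y}$ (so $f(x,y)=\langle f,K_{x,y}\rangle$ for $f\in H$). Assume $K_{x,y}(u,v)=K_{0,y}(u-x,v)$ for all $u,x\in G$, $v,y\in Y$. For $a\in G$ let $\rho(a)$ be the unitary operator on $H$ given by $(\rho(a)f)(x,y)=f(x-a,y)$, and $\mathcal C(\rho)=\{S\in\mathcal B(H): S\rho(a)=\rho(a)S\ \forall a\in G\}$. *)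

theory Defs
  imports "HOL-Analysis.Analysis"
begin

definition haar_measure :: "'g::{topological_ab_group_add, t2_space} measure \<Rightarrow> bool" where
  "haar_measure \<nu> \<longleftrightarrow>
     sets \<nu> = sets borel \<and>
     (\<forall>a A. A \<in> sets borel \<longrightarrow> emeasure \<nu> ((\<lambda>x. a + x) ` A) = emeasure \<nu> A) \<and>
     (\<forall>C. compact C \<longrightarrow> emeasure \<nu> C < \<infinity>) \<and>
     (\<forall>U. open U \<and> U \<noteq> {} \<longrightarrow> emeasure \<nu> U > 0) \<and>
     (\<forall>A \<in> sets borel. emeasure \<nu> A = (INF U\<in>{U. open U \<and> A \<subseteq> U}. emeasure \<nu> U)) \<and>
     (\<forall>U. open U \<longrightarrow> emeasure \<nu> U = (SUP C\<in>{C. compact C \<and> C \<subseteq> U}. emeasure \<nu> C))"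

definition L2_inner :: "'a measure \<Rightarrow> ('a \<Rightarrow> complex) \<Rightarrow> ('a \<Rightarrow> complex) \<Rightarrow> complex" where
  "L2_inner M f g = (\<integral>z. f z * cnj (g z) \<partial>M)"

definition L2_norm :: "'a measure \<Rightarrow> ('a \<Rightarrow> complex) \<Rightarrow> real" where
  "L2_norm M f = sqrt (\<integral>z. (cmod (f z))\<^sup>2 \<partial>M)"

definition square_integrable :: "'a measure \<Rightarrow> ('a \<Rightarrow> complex) \<Rightarrow> bool" where
  "square_integrable M f \<longleftrightarrow> f \<in> borel_measurable M \<and> integrable M (\<lambda>z. (cmod (f z))\<^sup>2)"

text \<open>H is a Hilbert space of (genuine) functions with the L^2(M) inner product:
  a complex linear subspace of square-integrable functions, complete in the L^2 norm.\<close>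
definition L2_hilbert_subspace :: "'a measure \<Rightarrow> ('a \<Rightarrow> complex) set \<Rightarrow> bool" where
  "L2_hilbert_subspace M H \<longleftrightarrow>
     (\<forall>f\<in>H. square_integrable M f) \<and>
     (\<lambda>z. 0) \<in> H \<and>
     (\<forall>f\<in>H. \<forall>g\<in>H. (\<lambda>z. f z + g z) \<in> H) \<and>
     (\<forall>c f. f \<in> H \<longrightarrow> (\<lambda>z. c * f z) \<in> H) \<and>
     (\<forall>s. (\<forall>n. s n \<in> H) \<and>
          (\<forall>e>0. \<exists>N. \<forall>m\<ge>N. \<forall>n\<ge>N. L2_norm M (\<lambda>z. s m z - s n z) < e) \<longrightarrow>
          (\<exists>f\<in>H. (\<lambda>n. L2_norm M (\<lambda>z. s n z - f z)) \<longlonglongrightarrow> 0))"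

definition L2_rkhs :: "'a measure \<Rightarrow> ('a \<Rightarrow> complex) set \<Rightarrow> ('a \<Rightarrow> 'a \<Rightarrow> complex) \<Rightarrow> bool" where
  "L2_rkhs M H K \<longleftrightarrow> L2_hilbert_subspace M H \<and>
     (\<forall>p. K p \<in> H) \<and> (\<forall>f\<in>H. \<forall>p. f p = L2_inner M f (K p))"

text \<open>S is a bounded linear operator on H (only its values on H matter).\<close>
definition bounded_op_on :: "'a measure \<Rightarrow> ('a \<Rightarrow> complex) set \<Rightarrow> (('a \<Rightarrow> complex) \<Rightarrow> ('a \<Rightarrow> complex)) \<Rightarrow> bool" where
  "bounded_op_on M H S \<longleftrightarrow>
     (\<forall>f\<in>H. S f \<in> H) \<and>
     (\<forall>f\<in>H. \<forall>g\<in>H. S (\<lambda>z. f z + g z) = (\<lambda>z. S f z + S g z)) \<and>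
     (\<forall>c. \<forall>f\<in>H. S (\<lambda>z. c * f z) = (\<lambda>z. c * S f z)) \<and>
     (\<exists>C. \<forall>f\<in>H. L2_norm M (S f) \<le> C * L2_norm M f)"

definition transl :: "'g::ab_group_add \<Rightarrow> ('g \<times> 'y \<Rightarrow> complex) \<Rightarrow> ('g \<times> 'y \<Rightarrow> complex)" where
  "transl a f = (\<lambda>(x, y). f (x - a, y))"

end

theory Submission
  imports Defs
begin

definition nsq :: "'a measure \<Rightarrow> ('a \<Rightarrow> complex) \<Rightarrow> real" where
  "nsq M f = (\<integral>z. (cmod (f z))\<^sup>2 \<partial>M)"

lemma nsq_nonneg: "nsq M f \<ge> 0"
  unfolding nsq_def by (rule integral_nonneg_AE) auto

lemma L2_norm_nsq: "L2_norm M f = sqrt (nsq M f)"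
  unfolding L2_norm_def nsq_def ..

lemma L2_prod_int:
  assumes f: "square_integrable M f" and g: "square_integrable M g"
  shows "integrable M (\<lambda>z. f z * cnj (g z))"
proof (rule Bochner_Integration.integrable_bound)
  show "integrable M (\<lambda>z. (cmod (f z))\<^sup>2 + (cmod (g z))\<^sup>2)"
    using f g unfolding square_integrable_def by auto
  show "(\<lambda>z. f z * cnj (g z)) \<in> borel_measurable M"
  proof -
    have mf[measurable]: "f \<in> borel_measurable M" "g \<in> borel_measurable M"
      using f g unfolding square_integrable_def by auto
    have "(\<lambda>z. cnj (g z)) \<in> borel_measurable M"
      by (rule borel_measurable_continuous_on[where f=cnj]) (simp_all add: mf)
    then show ?thesis by measurable
  qed
  show "AE z in M. norm (f z * cnj (g z)) \<le> norm ((cmod (f z))\<^sup>2 + (cmod (g z))\<^sup>2)"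
  proof (rule AE_I2)
    fix z
    have "cmod (f z) * cmod (g z) \<le> (cmod (f z))\<^sup>2 + (cmod (g z))\<^sup>2"
    proof -
      have "2 * cmod (f z) * cmod (g z) \<le> (cmod (f z))\<^sup>2 + (cmod (g z))\<^sup>2" by (rule sum_squares_bound)
      moreover have "0 \<le> cmod (f z) * cmod (g z)" by simp
      ultimately show ?thesis by linarith
    qed
    then show "norm (f z * cnj (g z)) \<le> norm ((cmod (f z))\<^sup>2 + (cmod (g z))\<^sup>2)"
      by (simp add: norm_mult)
  qed
qed

lemma ip_self: "L2_inner M f f = complex_of_real (nsq M f)"
proof -
  have eq: "(\<lambda>z. f z * cnj (f z)) = (\<lambda>z. complex_of_real ((cmod (f z))\<^sup>2))"
    using complex_norm_square by metis
  show ?thesis unfolding L2_inner_def nsq_def eq by (rule integral_complex_of_real)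
qed

lemma ip_cnj: "L2_inner M g f = cnj (L2_inner M f g)"
proof -
  have "cnj (L2_inner M f g) = (\<integral>z. cnj (f z * cnj (g z)) \<partial>M)"
    unfolding L2_inner_def by (rule Bochner_Integration.integral_cnj[symmetric])
  then show ?thesis unfolding L2_inner_def by (simp add: mult.commute)
qed

lemma ip_add_left:
  assumes "square_integrable M f" "square_integrable M g" "square_integrable M h"
  shows "L2_inner M (\<lambda>z. f z + g z) h = L2_inner M f h + L2_inner M g h"
  unfolding L2_inner_def using L2_prod_int[OF assms(1,3)] L2_prod_int[OF assms(2,3)]
  by (simp add: distrib_right)

lemma ip_scale_left: "L2_inner M (\<lambda>z. c * f z) h = c * L2_inner M f h"
  unfolding L2_inner_def by (simp add: mult.assoc)


lemma nsq_scale: "nsq M (\<lambda>z. c * f z) = (cmod c)\<^sup>2 * nsq M f"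
  unfolding nsq_def by (simp add: norm_mult power_mult_distrib)

lemma quad_cs:
  fixes a b r :: real
  assumes q: "\<And>t. 0 \<le> a + 2 * t * r + t\<^sup>2 * b" and a: "a \<ge> 0" and b: "b \<ge> 0"
  shows "r \<le> sqrt a * sqrt b"
proof (cases "r \<le> 0")
  case True
  have "0 \<le> sqrt a * sqrt b" using a b by simp
  with True show ?thesis by linarith
next
  case False
  show ?thesis
  proof (cases "b = 0")
    case True
    have "0 \<le> a + 2 * (-(a+1)/(2*r)) * r + (-(a+1)/(2*r))\<^sup>2 * b" by (rule q)
    moreover have "2 * (-(a+1)/(2*r)) * r = -(a+1)" using False by simp
    ultimately show ?thesis using True by simp
  next
    case b0: False
    have "0 \<le> a + 2 * (-r/b) * r + (-r/b)\<^sup>2 * b" by (rule q)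
    moreover have "2 * (-r/b) * r + (-r/b)\<^sup>2 * b = - (r\<^sup>2 / b)"
      using b0 by (simp add: power2_eq_square)
    ultimately have "r\<^sup>2 / b \<le> a" by simp
    then have "r\<^sup>2 \<le> a * b" using b0 b by (simp add: pos_divide_le_eq)
    then have "sqrt (r\<^sup>2) \<le> sqrt (a * b)" by (rule real_sqrt_le_mono)
    then show ?thesis using False by (simp add: real_sqrt_mult)
  qed
qed

locale L2H =
  fixes M :: "'a measure" and H :: "('a \<Rightarrow> complex) set"
  assumes hs: "L2_hilbert_subspace M H"
begin

lemma sq: "f \<in> H \<Longrightarrow> square_integrable M f"
  using hs unfolding L2_hilbert_subspace_def by auto

lemma H_add: "f \<in> H \<Longrightarrow> g \<in> H \<Longrightarrow> (\<lambda>z. f z + g z) \<in> H"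
  using hs unfolding L2_hilbert_subspace_def by auto

lemma H_scale: "f \<in> H \<Longrightarrow> (\<lambda>z. c * f z) \<in> H"
  using hs unfolding L2_hilbert_subspace_def by auto

lemma H_diff: "f \<in> H \<Longrightarrow> g \<in> H \<Longrightarrow> (\<lambda>z. f z - g z) \<in> H"
  using H_add[of f "\<lambda>z. (-1) * g z"] H_scale[of g "-1"] by simp

lemma ip_add_right: "f \<in> H \<Longrightarrow> g \<in> H \<Longrightarrow> h \<in> H \<Longrightarrow>
    L2_inner M h (\<lambda>z. f z + g z) = L2_inner M h f + L2_inner M h g"
proof -
  assume a: "f \<in> H" "g \<in> H" "h \<in> H"
  have "L2_inner M h (\<lambda>z. f z + g z) = cnj (L2_inner M (\<lambda>z. f z + g z) h)" by (rule ip_cnj)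
  also have "\<dots> = cnj (L2_inner M f h) + cnj (L2_inner M g h)"
    using ip_add_left[OF sq sq sq, OF a(1,2,3)] by simp
  also have "\<dots> = L2_inner M h f + L2_inner M h g" using ip_cnj[of M h f] ip_cnj[of M h g] by simp
  finally show ?thesis .
qed

lemma ip_scale_right: "L2_inner M h (\<lambda>z. c * f z) = cnj c * L2_inner M h f"
proof -
  have "L2_inner M h (\<lambda>z. c * f z) = cnj (L2_inner M (\<lambda>z. c * f z) h)" by (rule ip_cnj)
  also have "\<dots> = cnj c * cnj (L2_inner M f h)" by (simp add: ip_scale_left)
  also have "\<dots> = cnj c * L2_inner M h f" using ip_cnj[of M h f] by simp
  finally show ?thesis .
qed

lemma ip_diff_left: "f \<in> H \<Longrightarrow> g \<in> H \<Longrightarrow> h \<in> H \<Longrightarrow>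
    L2_inner M (\<lambda>z. f z - g z) h = L2_inner M f h - L2_inner M g h"
proof -
  assume a: "f \<in> H" "g \<in> H" "h \<in> H"
  have e: "(\<lambda>z. f z - g z) = (\<lambda>z. f z + (-1) * g z)" by simp
  have "L2_inner M (\<lambda>z. f z + (-1) * g z) h = L2_inner M f h + L2_inner M (\<lambda>z. (-1) * g z) h"
    by (rule ip_add_left[OF sq[OF a(1)] sq[OF H_scale[OF a(2)]] sq[OF a(3)]])
  also have "\<dots> = L2_inner M f h - L2_inner M g h" using ip_scale_left[of M "-1" g h] by simp
  finally show ?thesis unfolding e .
qed

lemma ip_diff_right: "f \<in> H \<Longrightarrow> g \<in> H \<Longrightarrow> h \<in> H \<Longrightarrow>
    L2_inner M h (\<lambda>z. f z - g z) = L2_inner M h f - L2_inner M h g"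
proof -
  assume a: "f \<in> H" "g \<in> H" "h \<in> H"
  have "L2_inner M h (\<lambda>z. f z - g z) = cnj (L2_inner M (\<lambda>z. f z - g z) h)" by (rule ip_cnj)
  also have "\<dots> = cnj (L2_inner M f h) - cnj (L2_inner M g h)"
    using ip_diff_left[OF a] by simp
  also have "\<dots> = L2_inner M h f - L2_inner M h g" using ip_cnj[of M h f] ip_cnj[of M h g] by simp
  finally show ?thesis .
qed

lemma nsq_add: assumes f: "f \<in> H" and g: "g \<in> H"
  shows "nsq M (\<lambda>z. f z + g z) = nsq M f + nsq M g + 2 * Re (L2_inner M f g)"
proof -
  have fg: "(\<lambda>z. f z + g z) \<in> H" by (rule H_add[OF f g])
  have e1: "complex_of_real (nsq M (\<lambda>z. f z + g z)) = L2_inner M (\<lambda>z. f z + g z) (\<lambda>z. f z + g z)"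
    by (rule ip_self[symmetric])
  have e2: "L2_inner M (\<lambda>z. f z + g z) (\<lambda>z. f z + g z) = L2_inner M f (\<lambda>z. f z + g z) + L2_inner M g (\<lambda>z. f z + g z)"
    by (rule ip_add_left[OF sq[OF f] sq[OF g] sq[OF fg]])
  have e3: "L2_inner M f (\<lambda>z. f z + g z) = L2_inner M f f + L2_inner M f g"
    by (rule ip_add_right[OF f g f])
  have e4: "L2_inner M g (\<lambda>z. f z + g z) = L2_inner M g f + L2_inner M g g"
    by (rule ip_add_right[OF f g g])
  have e5: "L2_inner M g f = cnj (L2_inner M f g)" by (rule ip_cnj)
  have e6: "L2_inner M f f = complex_of_real (nsq M f)" by (rule ip_self)
  have e7: "L2_inner M g g = complex_of_real (nsq M g)" by (rule ip_self)
  have e: "complex_of_real (nsq M (\<lambda>z. f z + g z)) =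
     complex_of_real (nsq M f) + L2_inner M f g + (cnj (L2_inner M f g) + complex_of_real (nsq M g))"
    unfolding e1 e2 e3 e4 e5 e6 e7 ..
  have "nsq M (\<lambda>z. f z + g z) = Re (complex_of_real (nsq M (\<lambda>z. f z + g z)))" by simp
  also have "\<dots> = nsq M f + Re (L2_inner M f g) + (Re (L2_inner M f g) + nsq M g)"
    unfolding e by simp
  finally show ?thesis by simp
qed

lemma nsq_diff: assumes "f \<in> H" "g \<in> H"
  shows "nsq M (\<lambda>z. f z - g z) = nsq M f + nsq M g - 2 * Re (L2_inner M f g)"
proof -
  have e: "(\<lambda>z. f z - g z) = (\<lambda>z. f z + (-1) * g z)" by simp
  have "nsq M (\<lambda>z. f z + (-1) * g z) = nsq M f + nsq M (\<lambda>z. (-1) * g z) + 2 * Re (L2_inner M f (\<lambda>z. (-1) * g z))"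
    by (rule nsq_add[OF assms(1) H_scale[OF assms(2)]])
  also have "\<dots> = nsq M f + nsq M g - 2 * Re (L2_inner M f g)"
    using ip_scale_right[of f "-1" g] nsq_scale[of M "-1" g] by simp
  finally show ?thesis unfolding e .
qed

lemma re_cs: assumes "f \<in> H" "g \<in> H"
  shows "Re (L2_inner M f g) \<le> sqrt (nsq M f) * sqrt (nsq M g)"
proof (rule quad_cs[OF _ nsq_nonneg nsq_nonneg])
  fix t :: real
  have "0 \<le> nsq M (\<lambda>z. f z + complex_of_real t * g z)" by (rule nsq_nonneg)
  also have "\<dots> = nsq M f + nsq M (\<lambda>z. complex_of_real t * g z) + 2 * Re (L2_inner M f (\<lambda>z. complex_of_real t * g z))"
    by (rule nsq_add[OF assms(1) H_scale[OF assms(2)]])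
  also have "\<dots> = nsq M f + (cmod (complex_of_real t))\<^sup>2 * nsq M g + 2 * Re (cnj (complex_of_real t) * L2_inner M f g)"
    by (simp only: nsq_scale ip_scale_right)
  also have "\<dots> = nsq M f + 2 * t * Re (L2_inner M f g) + t\<^sup>2 * nsq M g"
    by simp
  finally show "0 \<le> nsq M f + 2 * t * Re (L2_inner M f g) + t\<^sup>2 * nsq M g" .
qed

lemma cs: assumes "f \<in> H" "g \<in> H"
  shows "cmod (L2_inner M f g) \<le> sqrt (nsq M f) * sqrt (nsq M g)"
proof (cases "L2_inner M f g = 0")
  case True
  have "0 \<le> sqrt (nsq M f) * sqrt (nsq M g)" by (intro mult_nonneg_nonneg real_sqrt_ge_zero nsq_nonneg)
  with True show ?thesis by simp
next
  case False
  define w where "w = L2_inner M f g"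
  define c where "c = w / complex_of_real (cmod w)"
  have cm: "cmod c = 1" using False unfolding c_def w_def by (simp add: norm_divide)
  have "L2_inner M f (\<lambda>z. c * g z) = cnj c * w" unfolding w_def by (rule ip_scale_right)
  also have "\<dots> = complex_of_real (cmod w)"
  proof -
    have "cnj c * w = (cnj w * w) / complex_of_real (cmod w)" unfolding c_def by simp
    also have "cnj w * w = complex_of_real (cmod w) * complex_of_real (cmod w)"
      using complex_norm_square[of w] by (simp add: power2_eq_square mult.commute)
    finally show ?thesis using False unfolding w_def by simp
  qed
  finally have "cmod w = Re (L2_inner M f (\<lambda>z. c * g z))" by simp
  also have "\<dots> \<le> sqrt (nsq M f) * sqrt (nsq M (\<lambda>z. c * g z))"
    by (rule re_cs[OF assms(1) H_scale[OF assms(2)]])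
  also have "\<dots> = sqrt (nsq M f) * sqrt (nsq M g)" using cm nsq_scale[of M c g] by simp
  finally show ?thesis unfolding w_def .
qed

lemma triangle: assumes "f \<in> H" "g \<in> H"
  shows "sqrt (nsq M (\<lambda>z. f z + g z)) \<le> sqrt (nsq M f) + sqrt (nsq M g)"
proof (rule real_le_lsqrt)
  show "0 \<le> sqrt (nsq M f) + sqrt (nsq M g)" by (intro add_nonneg_nonneg real_sqrt_ge_zero nsq_nonneg)
  have "nsq M (\<lambda>z. f z + g z) \<le> nsq M f + nsq M g + 2 * (sqrt (nsq M f) * sqrt (nsq M g))"
    using nsq_add[OF assms] re_cs[OF assms] by simp
  also have "\<dots> = (sqrt (nsq M f) + sqrt (nsq M g))\<^sup>2"
    using nsq_nonneg[of M f] nsq_nonneg[of M g] by (simp add: power2_eq_square algebra_simps)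
  finally show "nsq M (\<lambda>z. f z + g z) \<le> (sqrt (nsq M f) + sqrt (nsq M g))\<^sup>2" .
qed

lemma nsq_neg_diff: "nsq M (\<lambda>z. f z - g z) = nsq M (\<lambda>z. g z - f z)"
proof -
  have "(\<lambda>z. f z - g z) = (\<lambda>z. (-1) * (g z - f z))" by simp
  then show ?thesis using nsq_scale[of M "-1" "\<lambda>z. g z - f z"] by simp
qed

lemma riesz:
  assumes add: "\<And>f g. f \<in> H \<Longrightarrow> g \<in> H \<Longrightarrow> \<phi> (\<lambda>z. f z + g z) = \<phi> f + \<phi> g"
    and scale: "\<And>c f. f \<in> H \<Longrightarrow> \<phi> (\<lambda>z. c * f z) = c * \<phi> f"
    and bnd: "\<And>f. f \<in> H \<Longrightarrow> cmod (\<phi> f) \<le> C * sqrt (nsq M f)"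
  shows "\<exists>h\<in>H. \<forall>f\<in>H. \<phi> f = L2_inner M f h"
proof (cases "\<forall>f\<in>H. \<phi> f = 0")
  case True
  have "(\<lambda>z. 0) \<in> H" using hs unfolding L2_hilbert_subspace_def by auto
  moreover have "L2_inner M f (\<lambda>z. 0) = 0" for f unfolding L2_inner_def by simp
  ultimately show ?thesis using True by auto
next
  case False
  then obtain f1 where f1: "f1 \<in> H" "\<phi> f1 \<noteq> 0" by auto
  have diff: "\<phi> (\<lambda>z. f z - g z) = \<phi> f - \<phi> g" if "f \<in> H" "g \<in> H" for f g
  proof -
    have "(\<lambda>z. f z - g z) = (\<lambda>z. f z + (-1) * g z)" by simp
    moreover have "\<phi> (\<lambda>z. f z + (-1) * g z) = \<phi> f + \<phi> (\<lambda>z. (-1) * g z)"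
      by (rule add[OF that(1) H_scale[OF that(2)]])
    moreover have "\<phi> (\<lambda>z. (-1) * g z) = - \<phi> g" using scale[OF that(2), of "-1"] by simp
    ultimately show ?thesis by simp
  qed
  define A where "A = {f\<in>H. \<phi> f = 1}"
  define d2 where "d2 = Inf (nsq M ` A)"
  have f1A: "(\<lambda>z. (1 / \<phi> f1) * f1 z) \<in> A"
  proof -
    have "(\<lambda>z. (1 / \<phi> f1) * f1 z) \<in> H" by (rule H_scale[OF f1(1)])
    moreover have "\<phi> (\<lambda>z. (1 / \<phi> f1) * f1 z) = 1" using scale[OF f1(1), of "1 / \<phi> f1"] f1(2) by simp
    ultimately show ?thesis unfolding A_def by blast
  qed
  have Ane: "nsq M ` A \<noteq> {}" using f1A by auto
  have Abdd: "bdd_below (nsq M ` A)" by (rule bdd_belowI[of _ 0]) (auto simp: nsq_nonneg)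
  have lower: "d2 \<le> nsq M g" if "g \<in> A" for g
    unfolding d2_def using Abdd that by (auto intro: cInf_lower)
  have "\<exists>f\<in>A. nsq M f < d2 + inverse (real (Suc n))" for n
  proof -
    have "Inf (nsq M ` A) < d2 + inverse (real (Suc n))" unfolding d2_def by simp
    then show ?thesis using cInf_less_iff[OF Ane Abdd] by auto
  qed
  then obtain s where sA: "\<And>n. s n \<in> A" and sn: "\<And>n. nsq M (s n) < d2 + inverse (real (Suc n))"
    by metis
  have sH: "s n \<in> H" for n using sA unfolding A_def by auto
  have sphi: "\<phi> (s n) = 1" for n using sA unfolding A_def by auto
  have par: "nsq M (\<lambda>z. s m z - s n z) \<le> 2 * inverse (real (Suc m)) + 2 * inverse (real (Suc n))" for m n
  proof -
    define mid where "mid = (\<lambda>z. (1/2) * (s m z + s n z))"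
    have midA: "mid \<in> A"
    proof -
      have "mid \<in> H" unfolding mid_def by (rule H_scale[OF H_add[OF sH sH]])
      moreover have "\<phi> mid = 1" unfolding mid_def
        using scale[OF H_add[OF sH sH], of "1/2" m n] add[OF sH sH, of m n] sphi[of m] sphi[of n] by simp
      ultimately show ?thesis unfolding A_def by blast
    qed
    have "nsq M mid = (1/4) * nsq M (\<lambda>z. s m z + s n z)"
      unfolding mid_def using nsq_scale[of M "1/2" "\<lambda>z. s m z + s n z"] by (simp add: power2_eq_square)
    then have "4 * d2 \<le> nsq M (\<lambda>z. s m z + s n z)" using lower[OF midA] by simp
    moreover have "nsq M (\<lambda>z. s m z + s n z) + nsq M (\<lambda>z. s m z - s n z) = 2 * nsq M (s m) + 2 * nsq M (s n)"
      using nsq_add[OF sH sH, of m n] nsq_diff[OF sH sH, of m n] by simp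
    ultimately show ?thesis using sn[of m] sn[of n] by simp
  qed
  have cauchy: "\<forall>e>0. \<exists>N. \<forall>m\<ge>N. \<forall>n\<ge>N. L2_norm M (\<lambda>z. s m z - s n z) < e"
  proof (intro allI impI)
    fix e :: real assume e: "e > 0"
    obtain N :: nat where N: "4 / e\<^sup>2 < real N" using reals_Archimedean2 by blast
    have "4 / real (Suc N) < e\<^sup>2"
    proof -
      have "4 < real N * e\<^sup>2" using N e by (simp add: field_simps)
      moreover have "0 < e\<^sup>2" using e by simp
      ultimately have "4 < e\<^sup>2 + real N * e\<^sup>2" by linarith
      then show ?thesis by (simp add: field_simps)
    qed
    show "\<exists>N. \<forall>m\<ge>N. \<forall>n\<ge>N. L2_norm M (\<lambda>z. s m z - s n z) < e"
    proof (intro exI allI impI)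
      fix m n assume mn: "N \<le> m" "N \<le> n"
      have im: "inverse (real (Suc m)) \<le> inverse (real (Suc N))" using mn by (simp add: field_simps)
      have inn: "inverse (real (Suc n)) \<le> inverse (real (Suc N))" using mn by (simp add: field_simps)
      have "nsq M (\<lambda>z. s m z - s n z) \<le> 4 * inverse (real (Suc N))"
        using par[of m n] im inn by linarith
      also have "\<dots> < e\<^sup>2" using \<open>4 / real (Suc N) < e\<^sup>2\<close> by (simp add: divide_inverse)
      finally have "sqrt (nsq M (\<lambda>z. s m z - s n z)) < sqrt (e\<^sup>2)" by (rule real_sqrt_less_mono)
      then show "L2_norm M (\<lambda>z. s m z - s n z) < e" using e by (simp add: L2_norm_nsq)
    qed
  qed
  obtain f0 where f0H: "f0 \<in> H" and lim: "(\<lambda>n. L2_norm M (\<lambda>z. s n z - f0 z)) \<longlonglongrightarrow> 0"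
    using hs cauchy sH unfolding L2_hilbert_subspace_def by blast
  define r where "r n = sqrt (nsq M (\<lambda>z. s n z - f0 z))" for n
  have rlim: "r \<longlonglongrightarrow> 0" using lim unfolding r_def L2_norm_nsq .
  have phif0: "\<phi> f0 = 1"
  proof -
    have "cmod (\<phi> f0 - 1) \<le> C * r n" for n
    proof -
      have "\<phi> f0 - 1 = \<phi> (\<lambda>z. f0 z - s n z)" using diff[OF f0H sH] sphi by simp
      then have "cmod (\<phi> f0 - 1) \<le> C * sqrt (nsq M (\<lambda>z. f0 z - s n z))"
        using bnd[OF H_diff[OF f0H sH]] by simp
      then show ?thesis unfolding r_def using nsq_neg_diff[of f0 "s n"] by simp
    qed
    moreover have "(\<lambda>n. C * r n) \<longlonglongrightarrow> C * 0" by (intro tendsto_intros rlim)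
    ultimately have "cmod (\<phi> f0 - 1) \<le> C * 0"
      by (intro LIMSEQ_le_const[of "\<lambda>n. C * r n"]) auto
    then show ?thesis by simp
  qed
  have f0A: "f0 \<in> A" unfolding A_def using f0H phif0 by auto
  have f0min: "nsq M f0 \<le> nsq M g" if "g \<in> A" for g
  proof -
    have "sqrt (nsq M f0) \<le> sqrt (d2 + inverse (real (Suc n))) + r n" for n
    proof -
      have e: "(\<lambda>z. s n z + (f0 z - s n z)) = f0" by simp
      have "sqrt (nsq M f0) \<le> sqrt (nsq M (s n)) + sqrt (nsq M (\<lambda>z. f0 z - s n z))"
        using triangle[OF sH H_diff[OF f0H sH], of n n] unfolding e .
      also have "sqrt (nsq M (s n)) \<le> sqrt (d2 + inverse (real (Suc n)))"
        using sn[of n] by simp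
      finally show ?thesis unfolding r_def using nsq_neg_diff[of f0 "s n"] by simp
    qed
    moreover have "(\<lambda>n. sqrt (d2 + inverse (real (Suc n))) + r n) \<longlonglongrightarrow> sqrt d2 + 0"
      by (intro tendsto_intros rlim LIMSEQ_inverse_real_of_nat_add)
    ultimately have "sqrt (nsq M f0) \<le> sqrt d2 + 0"
      by (intro LIMSEQ_le_const[of "\<lambda>n. sqrt (d2 + inverse (real (Suc n))) + r n"]) auto
    then have "nsq M f0 \<le> d2" by simp
    then show ?thesis using lower[OF that] by simp
  qed
  have orth: "L2_inner M f0 g = 0" if gH: "g \<in> H" and g0: "\<phi> g = 0" for g
  proof -
    define b where "b = L2_inner M f0 g"
    define Q where "Q = nsq M g"
    define sc where "sc = 1 / (Q + 1)"
    have Q0: "Q \<ge> 0" unfolding Q_def by (rule nsq_nonneg)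
    have sc0: "sc > 0" unfolding sc_def using Q0 by simp
    have scQ: "sc * Q \<le> 1" unfolding sc_def using Q0 by (simp add: field_simps)
    define t where "t = - (complex_of_real sc * b)"
    have tgA: "(\<lambda>z. f0 z + t * g z) \<in> A"
      unfolding A_def using H_add[OF f0H H_scale[OF gH]] add[OF f0H H_scale[OF gH]] scale[OF gH] g0 phif0
      by simp
    have "nsq M (\<lambda>z. f0 z + t * g z) = nsq M f0 + nsq M (\<lambda>z. t * g z) + 2 * Re (L2_inner M f0 (\<lambda>z. t * g z))"
      by (rule nsq_add[OF f0H H_scale[OF gH]])
    also have "\<dots> = nsq M f0 + (cmod t)\<^sup>2 * Q + 2 * Re (cnj t * b)"
      unfolding Q_def b_def by (simp only: nsq_scale ip_scale_right)
    also have "(cmod t)\<^sup>2 = sc * sc * (cmod b)\<^sup>2"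
      unfolding t_def using sc0 by (simp add: norm_mult power_mult_distrib power2_eq_square)
    also have "Re (cnj t * b) = - sc * (cmod b)\<^sup>2"
    proof -
      have "cnj t * b = - (complex_of_real sc * (cnj b * b))" unfolding t_def by simp
      also have "cnj b * b = complex_of_real ((cmod b)\<^sup>2)" using complex_norm_square[of b] by (simp add: mult.commute)
      finally show ?thesis by simp
    qed
    finally have eq: "nsq M (\<lambda>z. f0 z + t * g z) = nsq M f0 + sc * sc * (cmod b)\<^sup>2 * Q - 2 * sc * (cmod b)\<^sup>2"
      by simp
    have "nsq M f0 \<le> nsq M (\<lambda>z. f0 z + t * g z)" by (rule f0min[OF tgA])
    then have "0 \<le> sc * (sc * (cmod b)\<^sup>2 * Q - 2 * (cmod b)\<^sup>2)" using eq by (simp add: algebra_simps)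
    then have h1: "0 \<le> sc * (cmod b)\<^sup>2 * Q - 2 * (cmod b)\<^sup>2" using sc0 by (simp add: zero_le_mult_iff)
    have "sc * (cmod b)\<^sup>2 * Q = (sc * Q) * (cmod b)\<^sup>2" by simp
    also have "\<dots> \<le> 1 * (cmod b)\<^sup>2" by (rule mult_right_mono[OF scQ]) simp
    finally have h2: "sc * (cmod b)\<^sup>2 * Q \<le> 1 * (cmod b)\<^sup>2" .
    have "(cmod b)\<^sup>2 \<le> 0" using h1 h2 by linarith
    then show ?thesis unfolding b_def by simp
  qed
  have nf0: "nsq M f0 > 0"
  proof (rule ccontr)
    assume "\<not> nsq M f0 > 0"
    then have "nsq M f0 = 0" using nsq_nonneg[of M f0] by simp
    then show False using bnd[OF f0H] phif0 by simp
  qed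
  define h where "h = (\<lambda>z. complex_of_real (1 / nsq M f0) * f0 z)"
  have hH: "h \<in> H" unfolding h_def by (rule H_scale[OF f0H])
  have "\<phi> f = L2_inner M f h" if fH: "f \<in> H" for f
  proof -
    have gH: "(\<lambda>z. f z - \<phi> f * f0 z) \<in> H" by (rule H_diff[OF fH H_scale[OF f0H]])
    have "\<phi> (\<lambda>z. f z - \<phi> f * f0 z) = 0" using diff[OF fH H_scale[OF f0H]] scale[OF f0H] phif0 by simp
    then have "L2_inner M f0 (\<lambda>z. f z - \<phi> f * f0 z) = 0" by (rule orth[OF gH])
    then have "L2_inner M f0 f - cnj (\<phi> f) * L2_inner M f0 f0 = 0"
      using ip_diff_right[OF fH H_scale[OF f0H] f0H] ip_scale_right[of f0 "\<phi> f" f0] by simp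
    then have e1: "L2_inner M f0 f = cnj (\<phi> f) * complex_of_real (nsq M f0)" by (simp add: ip_self)
    have "L2_inner M f h = complex_of_real (1 / nsq M f0) * L2_inner M f f0"
      unfolding h_def ip_scale_right by simp
    also have "L2_inner M f f0 = cnj (L2_inner M f0 f)" by (rule ip_cnj)
    also have "\<dots> = \<phi> f * complex_of_real (nsq M f0)" unfolding e1 by simp
    finally show ?thesis using nf0 by simp
  qed
  then show ?thesis using hH by auto
qed

end


theorem proposition4p1:
  fixes \<nu> :: "'g::{topological_ab_group_add, t2_space} measure"
    and lam :: "'y measure"
    and H :: "('g \<times> 'y \<Rightarrow> complex) set"
    and K :: "'g \<times> 'y \<Rightarrow> 'g \<times> 'y \<Rightarrow> complex"
    and T :: "('g \<times> 'y \<Rightarrow> complex) \<Rightarrow> ('g \<times> 'y \<Rightarrow> complex)"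
    and KT :: "'g \<Rightarrow> 'y \<Rightarrow> 'g \<Rightarrow> 'y \<Rightarrow> complex"
  assumes LC: "locally_compact_space (euclidean :: 'g topology)"
    and haar: "haar_measure \<nu>"
    and rkhs: "L2_rkhs (\<nu> \<Otimes>\<^sub>M lam) H K"
    and Kinv: "\<And>x y u v. K (x, y) (u, v) = K (0, y) (u - x, v)"
    and Tbdd: "bounded_op_on (\<nu> \<Otimes>\<^sub>M lam) H T"
    and Tcomm: "\<And>a f. f \<in> H \<Longrightarrow> T (transl a f) = transl a (T f)"
    and KT_def: "\<And>x y u v. KT x y u v = T (K (u, v)) (x, y)"
  shows "(\<forall>f\<in>H. \<forall>x y. T f (x, y) = (\<integral>(u, v). KT x y u v * f (u, v) \<partial>(\<nu> \<Otimes>\<^sub>M lam)))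
     \<and> (\<forall>x y u v. KT x y u v = KT (x - u) y 0 v)
     \<and> (\<forall>v. (\<lambda>(x, y). KT x y 0 v) \<in> H)
     \<and> (\<forall>y. (\<lambda>(u, v). cnj (KT 0 y u v)) \<in> H)"
proof -
  define M where "M = \<nu> \<Otimes>\<^sub>M lam"
  have hs: "L2_hilbert_subspace M H" and KH: "\<And>p. K p \<in> H"
    and repr: "\<And>f p. f \<in> H \<Longrightarrow> f p = L2_inner M f (K p)"
    using rkhs unfolding L2_rkhs_def M_def by auto
  interpret L: L2H M H by (rule L2H.intro[OF hs])
  have TH: "\<And>f. f \<in> H \<Longrightarrow> T f \<in> H"
    and Tadd: "\<And>f g. f \<in> H \<Longrightarrow> g \<in> H \<Longrightarrow> T (\<lambda>z. f z + g z) = (\<lambda>z. T f z + T g z)"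
    and Tscale: "\<And>c f. f \<in> H \<Longrightarrow> T (\<lambda>z. c * f z) = (\<lambda>z. c * T f z)"
    using Tbdd unfolding bounded_op_on_def by auto
  obtain C0 where C0: "\<And>f. f \<in> H \<Longrightarrow> L2_norm M (T f) \<le> C0 * L2_norm M f"
    using Tbdd unfolding bounded_op_on_def M_def by blast
  have adj: "(\<lambda>(u, v). cnj (KT x y u v)) \<in> H \<and>
      (\<forall>f\<in>H. T f (x, y) = L2_inner M f (\<lambda>(u, v). cnj (KT x y u v)))" for x y
  proof -
    define \<phi> where "\<phi> f = T f (x, y)" for f
    define C where "C = C0 * sqrt (nsq M (K (x, y)))"
    have "\<exists>h\<in>H. \<forall>f\<in>H. \<phi> f = L2_inner M f h"
    proof (rule L.riesz)
      fix f g assume "f \<in> H" "g \<in> H"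
      then show "\<phi> (\<lambda>z. f z + g z) = \<phi> f + \<phi> g" unfolding \<phi>_def by (simp add: Tadd)
    next
      fix c f assume "f \<in> H"
      then show "\<phi> (\<lambda>z. c * f z) = c * \<phi> f" unfolding \<phi>_def by (simp add: Tscale)
    next
      fix f assume fH: "f \<in> H"
      have "cmod (\<phi> f) = cmod (L2_inner M (T f) (K (x, y)))" unfolding \<phi>_def using repr[OF TH[OF fH]] by simp
      also have "\<dots> \<le> sqrt (nsq M (T f)) * sqrt (nsq M (K (x, y)))" by (rule L.cs[OF TH[OF fH] KH])
      also have "\<dots> \<le> (C0 * sqrt (nsq M f)) * sqrt (nsq M (K (x, y)))"
        by (rule mult_right_mono) (use C0[OF fH] in \<open>simp_all add: L2_norm_nsq nsq_nonneg\<close>)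
      also have "\<dots> = C * sqrt (nsq M f)" unfolding C_def by simp
      finally show "cmod (\<phi> f) \<le> C * sqrt (nsq M f)" .
    qed
    then obtain h where hH: "h \<in> H" and hrep: "\<And>f. f \<in> H \<Longrightarrow> T f (x, y) = L2_inner M f h"
      unfolding \<phi>_def by auto
    have heq: "h = (\<lambda>(u, v). cnj (KT x y u v))"
    proof (rule ext, clarify)
      fix u v
      have "h (u, v) = L2_inner M h (K (u, v))" by (rule repr[OF hH])
      also have "\<dots> = cnj (L2_inner M (K (u, v)) h)" by (rule ip_cnj)
      also have "L2_inner M (K (u, v)) h = T (K (u, v)) (x, y)" by (rule hrep[OF KH, symmetric])
      finally show "h (u, v) = cnj (KT x y u v)" by (simp add: KT_def)
    qed
    show ?thesis using hH hrep unfolding heq by auto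
  qed
  have P1: "\<forall>f\<in>H. \<forall>x y. T f (x, y) = (\<integral>(u, v). KT x y u v * f (u, v) \<partial>(\<nu> \<Otimes>\<^sub>M lam))"
  proof (intro ballI allI)
    fix f x y assume fH: "f \<in> H"
    have "T f (x, y) = L2_inner M f (\<lambda>(u, v). cnj (KT x y u v))" using adj fH by blast
    also have "\<dots> = (\<integral>(u, v). KT x y u v * f (u, v) \<partial>(\<nu> \<Otimes>\<^sub>M lam))"
      unfolding L2_inner_def M_def by (rule arg_cong[where f="integral\<^sup>L _"]) (auto simp: fun_eq_iff)
    finally show "T f (x, y) = (\<integral>(u, v). KT x y u v * f (u, v) \<partial>(\<nu> \<Otimes>\<^sub>M lam))" .
  qed
  have P2: "\<forall>x y u v. KT x y u v = KT (x - u) y 0 v"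
  proof (intro allI)
    fix x y u v
    have Kt: "K (u, v) = transl u (K (0, v))"
      unfolding transl_def by (auto simp: fun_eq_iff Kinv[of u v])
    have "KT x y u v = T (transl u (K (0, v))) (x, y)" unfolding KT_def Kt ..
    also have "\<dots> = transl u (T (K (0, v))) (x, y)" using Tcomm[OF KH] by simp
    also have "\<dots> = KT (x - u) y 0 v" unfolding transl_def KT_def by simp
    finally show "KT x y u v = KT (x - u) y 0 v" .
  qed
  have P3: "\<forall>v. (\<lambda>(x, y). KT x y 0 v) \<in> H"
  proof
    fix v
    have "(\<lambda>(x, y). KT x y 0 v) = T (K (0, v))" by (auto simp: fun_eq_iff KT_def)
    then show "(\<lambda>(x, y). KT x y 0 v) \<in> H" using TH[OF KH] by simp
  qed
  have P4: "\<forall>y. (\<lambda>(u, v). cnj (KT 0 y u v)) \<in> H" using adj by blast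
  show ?thesis using P1 P2 P3 P4 by blast
qed

end
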